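(* Let $N+1\ge 10$ and $m=\lfloor (N+1)/10\rfloor$. Let $\rho_1,\dots,\rho_{N+1}$ be a multiset of transfer exponents to a target $\mathcal{D}$ (with common constant $C_\rho$), ordered as $\rho_{(1)}\le\dots\le\rho_{(N+1)}$, and let $P_1,\dots,P_{N+1}$ be distributions such that $P_t$ has transfer exponent $\rho_t$ to $\mathcal{D}$; let $P_{(t)}$ denote the distribution with exponent $\rho_{(t)}$. Draw $i_1,\dots,i_{N+1}$ i.i.d. from $\mathrm{Unif}(\{1,\dots,m\})$ and set $Q_t=P_{(i_t)}$. Then with probability at least $0.97$ there exists a permutation $\pi$ of $[N+1]$ with $i_{\pi(t)}\le t$ for all $t\in[N+1]$; in particular, on this event $Q_{\pi(t)}$ has transfer exponent $\rho_{(t)}$ to $\mathcal{D}$ for every $t$, i.e. some permutation of $Q_1,\dots,Q_{N+1}$ admits the transfer exponents $\rho_{(1)},\dots,\rho_{(N+1)}$.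
   Context: A distribution $P$ has transfer exponent $\rho>0$ to $\mathcal{D}$ with respect to a concept class $\mathcal{H}$ (with constant $C_\rho\ge2$) if $\mathcal{E}_{\mathcal{D}}(h)\le C_\rho(\mathcal{E}_P(h))^{1/\rho}$ for all $h\in\mathcal{H}$, where $\mathcal{E}_P(h)=\mathrm{er}_P(h)-\inf_{h'\in\mathcal{H}}\mathrm{er}_P(h')$ and $\mathrm{er}_P(h)=P\{(x,y):h(x)\ne y\}$. *)

theory Defs
  imports "HOL-Probability.Probability"
begin

definition er :: "('x \<times> 'y) measure \<Rightarrow> ('x \<Rightarrow> 'y) \<Rightarrow> real" where
  "er P h = measure P {(x, y). h x \<noteq> y}"

definition excess_er :: "('x \<Rightarrow> 'y) set \<Rightarrow> ('x \<times> 'y) measure \<Rightarrow> ('x \<Rightarrow> 'y) \<Rightarrow> real" where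
  "excess_er H P h = er P h - (INF h'\<in>H. er P h')"

definition has_transfer_exponent ::
  "('x \<Rightarrow> 'y) set \<Rightarrow> ('x \<times> 'y) measure \<Rightarrow> ('x \<times> 'y) measure \<Rightarrow> real \<Rightarrow> real \<Rightarrow> bool" where
  "has_transfer_exponent H P D \<rho> C \<longleftrightarrow>
     \<rho> > 0 \<and> (\<forall>h\<in>H. excess_er H D h \<le> C * (excess_er H P h) powr (1 / \<rho>))"

end

theory Submission
  imports Defs
begin

lemma comb_perm:
  fixes i :: "nat \<Rightarrow> nat"
  shows "finite S \<Longrightarrow> card S = n \<Longrightarrow> (\<forall>t\<in>{1..n}. t \<le> card {s\<in>S. i s \<le> t})
     \<Longrightarrow> \<exists>\<pi>. bij_betw \<pi> {1..n} S \<and> (\<forall>t\<in>{1..n}. i (\<pi> t) \<le> t)"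
proof (induction n arbitrary: S)
  case 0
  then show ?case by (auto simp: bij_betw_def)
next
  case (Suc n)
  have ne: "S \<noteq> {}" using Suc.prems by auto
  have "Max (i ` S) \<in> i ` S" using Suc.prems(1) ne by (intro Max_in) auto
  then obtain s0 where s0a: "s0 \<in> S" "i s0 = Max (i ` S)" by (metis imageE)
  have s0: "s0 \<in> S" "\<forall>s\<in>S. i s \<le> i s0"
    using s0a Max_ge[of "i ` S"] Suc.prems(1) by auto
  have "Suc n \<le> card {s\<in>S. i s \<le> Suc n}" using Suc.prems(3) by auto
  moreover have "card {s\<in>S. i s \<le> Suc n} \<le> card S" using Suc.prems(1) by (intro card_mono) auto
  ultimately have "{s\<in>S. i s \<le> Suc n} = S" using Suc.prems
    by (metis (no_types, lifting) card_subset_eq le_antisym mem_Collect_eq subsetI)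
  hence s0le: "i s0 \<le> Suc n" using s0 by blast
  define S' where "S' = S - {s0}"
  have fS': "finite S'" "card S' = n" using Suc.prems s0 by (auto simp: S'_def)
  have "\<forall>t\<in>{1..n}. t \<le> card {s\<in>S'. i s \<le> t}"
  proof
    fix t assume t: "t \<in> {1..n}"
    show "t \<le> card {s\<in>S'. i s \<le> t}"
    proof (cases "i s0 \<le> t")
      case True
      hence "{s\<in>S'. i s \<le> t} = S'" using s0 by (auto simp: S'_def)
      then show ?thesis using fS' t by auto
    next
      case False
      hence "{s\<in>S'. i s \<le> t} = {s\<in>S. i s \<le> t}" by (auto simp: S'_def)
      then show ?thesis using Suc.prems(3) t by auto
    qed
  qed
  then obtain \<pi>' where pi': "bij_betw \<pi>' {1..n} S'" "\<forall>t\<in>{1..n}. i (\<pi>' t) \<le> t"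
    using Suc.IH fS' by blast
  define \<pi> where "\<pi> = \<pi>'(Suc n := s0)"
  have b1: "bij_betw \<pi> {1..n} S'"
    using pi'(1) by (rule bij_betw_cong[THEN iffD1, rotated]) (auto simp: \<pi>_def)
  have "bij_betw \<pi> ({1..n} \<union> {Suc n}) (S' \<union> {\<pi> (Suc n)})"
    using notIn_Un_bij_betw3[of "Suc n" "{1..n}" \<pi> S'] b1 by (auto simp: \<pi>_def S'_def)
  moreover have "{1..n} \<union> {Suc n} = {1..Suc n}" by auto
  moreover have "S' \<union> {\<pi> (Suc n)} = S" using s0 by (auto simp: \<pi>_def S'_def)
  ultimately have "bij_betw \<pi> {1..Suc n} S" by simp
  moreover have "\<forall>t\<in>{1..Suc n}. i (\<pi> t) \<le> t"
    using pi'(2) s0le by (auto simp: \<pi>_def le_Suc_eq)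
  ultimately show ?case by blast
qed

lemma mono_transfer:
  assumes "has_transfer_exponent H P D r C" "prob_space P" "r \<le> r'" "C \<ge> 0"
  shows "has_transfer_exponent H P D r' C"
proof -
  have r: "r > 0" using assms(1) by (simp add: has_transfer_exponent_def)
  have ex: "0 \<le> excess_er H P h \<and> excess_er H P h \<le> 1" if h: "h \<in> H" for h
  proof -
    have er01: "0 \<le> er P g \<and> er P g \<le> 1" for g
      using prob_space.prob_le_1[OF assms(2)] by (simp add: er_def)
    have bdd: "bdd_below ((\<lambda>g. er P g) ` H)" using er01 by (intro bdd_belowI[of _ 0]) auto
    have "(INF g\<in>H. er P g) \<le> er P h" using bdd h by (rule cINF_lower)
    moreover have "0 \<le> (INF g\<in>H. er P g)" using h er01 by (intro cINF_greatest) auto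
    ultimately show ?thesis using er01[of h] by (simp add: excess_er_def)
  qed
  show ?thesis unfolding has_transfer_exponent_def
  proof (intro conjI ballI)
    show "r' > 0" using r assms(3) by simp
  next
    fix h assume h: "h \<in> H"
    have "excess_er H D h \<le> C * excess_er H P h powr (1 / r)"
      using assms(1) h by (simp add: has_transfer_exponent_def)
    also have "\<dots> \<le> C * excess_er H P h powr (1 / r')"
      using ex[OF h] r assms(3,4)
      by (intro mult_left_mono powr_mono') (auto simp: frac_le)
    finally show "excess_er H D h \<le> C * excess_er H P h powr (1 / r')" .
  qed
qed

lemma exp5: "exp (5::real) \<ge> 67"
proof -
  have "(5/4::real)^20 \<le> exp (1/4) ^ 20"
    by (intro power_mono) (use exp_ge_add_one_self[of "1/4::real"] in auto)
  also have "\<dots> = exp 5" by (simp flip: exp_of_nat_mult)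
  moreover have "(67::real) \<le> (5/4)^20" by (simp add: power_divide)
  ultimately show ?thesis by linarith
qed

lemma bad_bound:
  fixes n m t :: nat
  assumes nm: "10*m \<le> n" and m1: "1 \<le> m" and t: "t \<in> {1..m}"
  shows "measure_pmf.prob (Pi_pmf {1..n} (1::nat) (\<lambda>_. pmf_of_set {1..m}))
           {i. card {s\<in>{1..n}. i s \<le> t} < t} \<le> 0.03 * (1/2)^t"
proof -
  define M where "M = Pi_pmf {1..n} (1::nat) (\<lambda>_. pmf_of_set {1..m})"
  define g where "g = (\<lambda>v::nat. if v \<le> t then 1/2 else (1::real))"
  define Z where "Z = (\<lambda>i. \<Prod>s\<in>{1..n}. g (i s))"
  have Zeq: "Z i = (1/2) ^ card {s\<in>{1..n}. i s \<le> t}" for i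
    by (simp add: Z_def g_def prod.If_cases Int_def)
  have Znn: "0 \<le> Z i" for i by (simp add: Zeq)
  have ne: "{1..m} \<noteq> {}" using m1 by auto
  have intg: "integrable (measure_pmf (pmf_of_set {1..m})) g"
    using ne by (intro integrable_measure_pmf_finite) auto
  have intZ: "integrable (measure_pmf M) Z"
    unfolding M_def Z_def using intg by (intro integrable_prod_Pi_pmf) auto
  have sumg: "(\<Sum>v\<in>{1..m}. g v) = real m - real t / 2"
  proof -
    have "(\<Sum>v\<in>{1..m}. g v) = (\<Sum>v\<in>{1..m}. 1 - (if v \<le> t then 1/2 else 0))"
      by (intro sum.cong) (auto simp: g_def)
    also have "\<dots> = real m - (\<Sum>v\<in>{1..m}. (if v \<le> t then 1/2 else 0))"
      by (simp add: sum_subtractf)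
    also have "(\<Sum>v\<in>{1..m}. (if v \<le> t then 1/2 else (0::real))) = (\<Sum>v\<in>{1..t}. 1/2)"
      using t by (intro sum.mono_neutral_cong_right) auto
    finally show ?thesis by simp
  qed
  have Eg: "measure_pmf.expectation (pmf_of_set {1..m}) g = 1 - real t / (2 * real m)"
    using ne m1 unfolding integral_pmf_of_set[OF ne finite_atLeastAtMost] sumg
    by (simp add: field_simps)
  have EZ: "measure_pmf.expectation M Z = (1 - real t / (2 * real m)) ^ n"
  proof -
    have "measure_pmf.expectation M Z = (\<Prod>s\<in>{1..n}. measure_pmf.expectation (pmf_of_set {1..m}) g)"
      unfolding M_def Z_def using intg
      by (intro expectation_prod_Pi_pmf) (auto simp: g_def)
    also have "\<dots> = (1 - real t / (2 * real m)) ^ n" by (simp only: Eg prod_constant card_atLeastAtMost) simp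
    finally show ?thesis .
  qed
  have t1: "1 \<le> t" "t \<le> m" using t by auto
  have "(1 - real t / (2 * real m)) ^ n \<le> exp (- (real t / (2 * real m))) ^ n"
  proof (intro power_mono)
    show "1 - real t / (2 * real m) \<le> exp (- (real t / (2 * real m)))"
      using exp_ge_add_one_self[of "- (real t / (2 * real m))"] by simp
    show "0 \<le> 1 - real t / (2 * real m)" using t1 m1 by (simp add: field_simps)
  qed
  also have "\<dots> = exp (- (real n * real t / (2 * real m)))"
    by (simp flip: exp_of_nat_mult)
  also have "\<dots> \<le> exp (- 5 * real t)"
  proof -
    have "real (10*m) \<le> real n" using nm by linarith
    hence "10 * real m * real t \<le> real n * real t" by (intro mult_right_mono) auto
    hence "5 * real t \<le> real n * real t / (2 * real m)" using m1 by (simp add: field_simps)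
    thus ?thesis by simp
  qed
  also have "\<dots> = exp (-5) ^ t" by (simp flip: exp_of_nat_mult)
  finally have EZb: "measure_pmf.expectation M Z \<le> exp (-5) ^ t" using EZ by simp
  have c0: "(0::real) < (1/2)^(t-1)" by simp
  have "measure_pmf.prob M {i. card {s\<in>{1..n}. i s \<le> t} < t}
        \<le> measure_pmf.prob M {i\<in>space (measure_pmf M). Z i \<ge> (1/2)^(t-1)}"
  proof (rule measure_pmf.finite_measure_mono)
    show "{i. card {s\<in>{1..n}. i s \<le> t} < t} \<subseteq> {i\<in>space (measure_pmf M). Z i \<ge> (1/2)^(t-1)}"
    proof (rule subsetI)
      fix i assume "i \<in> {i. card {s\<in>{1..n}. i s \<le> t} < t}"
      hence "card {s\<in>{1..n}. i s \<le> t} \<le> t - 1" by simp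
      hence "(1/2::real)^(t-1) \<le> (1/2) ^ card {s\<in>{1..n}. i s \<le> t}"
        by (rule power_decreasing) simp_all
      thus "i \<in> {i\<in>space (measure_pmf M). Z i \<ge> (1/2)^(t-1)}" by (simp add: Zeq)
    qed
  qed simp
  also have "\<dots> \<le> measure_pmf.expectation M Z / (1/2)^(t-1)"
    by (rule integral_Markov_inequality_measure[OF intZ sets.top AE_I2[OF Znn] c0])
  also have "\<dots> \<le> exp (-5) ^ t / (1/2)^(t-1)"
    by (rule divide_right_mono[OF EZb]) simp
  also have "\<dots> \<le> 0.03 * (1/2)^t"
  proof -
    have e: "exp (-5::real) * exp 5 = 1" by (simp flip: exp_add)
    have q0: "0 \<le> 4 * exp (-5::real)" by simp
    have q: "4 * exp (-5::real) \<le> 0.06" using exp5 by (simp add: exp_minus field_simps)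
    have "(4 * exp (-5::real)) ^ t \<le> (4 * exp (-5)) ^ 1"
      using q q0 t1 by (intro power_decreasing) auto
    hence "(4 * exp (-5::real)) ^ t \<le> 0.06" using q by simp
    moreover have EQ: "exp (-5) ^ t / (1/2)^(t-1) = (2 * exp (-5::real)) ^ t / 2"
    proof -
      have "(2::real)^t = 2 * 2^(t-1)" using t1 by (metis One_nat_def Suc_pred' less_eq_Suc_le power_Suc)
      moreover have "exp (-5) ^ t / (1/2)^(t-1) = exp (-5::real) ^ t * 2^(t-1)"
        by (simp add: power_one_over)
      ultimately show ?thesis by (simp add: power_mult_distrib)
    qed
    moreover have LE: "(2 * exp (-5::real)) ^ t / 2 \<le> 0.03 * (1/2)^t"
    proof -
      have E4: "(2 * exp (-5::real)) ^ t * 2^t = (4 * exp (-5::real)) ^ t"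
      proof -
        have "(2::real)^t * 2^t = 4^t" by (simp flip: power_mult_distrib)
        thus ?thesis by (simp add: power_mult_distrib)
      qed
      moreover have "(2::real)^t > 0" by simp
      have X: "(2 * exp (-5::real)) ^ t * 2^t \<le> 0.06"
        unfolding E4 by (rule \<open>(4 * exp (-5::real)) ^ t \<le> 0.06\<close>)
      have "(2 * exp (-5::real)) ^ t \<le> 0.06 / 2^t"
        by (rule pos_le_divide_eq[THEN iffD2]) (simp, rule X)
      thus ?thesis by (simp add: power_one_over)
    qed
    show ?thesis using EQ LE by (rule ord_eq_le_trans)
  qed
  finally show ?thesis unfolding M_def .
qed


lemma geom_half: "(\<Sum>t\<in>{1..m}. (1/2::real)^t) = 1 - (1/2)^m"
  by (induction m) (auto simp: atLeastAtMostSuc_conv)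

theorem lemmaD2:
  fixes N m :: nat
    and H :: "('x \<Rightarrow> 'y) set"
    and D :: "('x \<times> 'y) measure"
    and P :: "nat \<Rightarrow> ('x \<times> 'y) measure"
    and \<rho> :: "nat \<Rightarrow> real"
    and C :: real
    and \<sigma> :: "nat \<Rightarrow> nat"
  assumes "N + 1 \<ge> 10"
    and "m = (N + 1) div 10"
    and "C \<ge> 2"
    and "prob_space D"
    and "\<forall>t\<in>{1..N+1}. prob_space (P t)"
    and "\<forall>t\<in>{1..N+1}. has_transfer_exponent H (P t) D (\<rho> t) C"
    and "bij_betw \<sigma> {1..N+1} {1..N+1}"
    and "\<forall>s\<in>{1..N+1}. \<forall>t\<in>{1..N+1}. s \<le> t \<longrightarrow> \<rho> (\<sigma> s) \<le> \<rho> (\<sigma> t)"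
  shows "measure_pmf.prob (Pi_pmf {1..N+1} 1 (\<lambda>_. pmf_of_set {1..m}))
           {i. \<exists>\<pi>. bij_betw \<pi> {1..N+1} {1..N+1}
                   \<and> (\<forall>t\<in>{1..N+1}. i (\<pi> t) \<le> t)
                   \<and> (\<forall>t\<in>{1..N+1}. has_transfer_exponent H (P (\<sigma> (i (\<pi> t)))) D (\<rho> (\<sigma> t)) C)}
         \<ge> 0.97"
proof -
  define M where "M = Pi_pmf {1..N+1} (1::nat) (\<lambda>_. pmf_of_set {1..m})"
  define G where "G = {i. \<exists>\<pi>. bij_betw \<pi> {1..N+1} {1..N+1}
                   \<and> (\<forall>t\<in>{1..N+1}. i (\<pi> t) \<le> t)
                   \<and> (\<forall>t\<in>{1..N+1}. has_transfer_exponent H (P (\<sigma> (i (\<pi> t)))) D (\<rho> (\<sigma> t)) C)}"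
  define Bad where "Bad = (\<Union>t\<in>{1..m}. {i::nat\<Rightarrow>nat. card {s\<in>{1..N+1}. i s \<le> t} < t})"
  have m1: "1 \<le> m" and nm: "10 * m \<le> N + 1" using assms(1,2) by auto
  have ne: "{1..m} \<noteq> {}" using m1 by auto
  have sub: "(UNIV - Bad) \<inter> set_pmf M \<subseteq> G"
  proof
    fix i assume iin: "i \<in> (UNIV - Bad) \<inter> set_pmf M"
    have irange: "i s \<in> {1..m}" if "s \<in> {1..N+1}" for s
      using iin that ne by (auto simp: M_def set_Pi_pmf PiE_dflt_def)
    have cond: "\<forall>t\<in>{1..N+1}. t \<le> card {s\<in>{1..N+1}. i s \<le> t}"
    proof
      fix t assume t: "t \<in> {1..N+1}"
      show "t \<le> card {s\<in>{1..N+1}. i s \<le> t}"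
      proof (cases "t \<le> m")
        case True
        then show ?thesis using iin t by (auto simp: Bad_def not_less)
      next
        case False
        hence "{s\<in>{1..N+1}. i s \<le> t} = {1..N+1}" using irange by fastforce
        then show ?thesis using t by simp
      qed
    qed
    obtain \<pi> where pi: "bij_betw \<pi> {1..N+1} {1..N+1}" "\<forall>t\<in>{1..N+1}. i (\<pi> t) \<le> t"
      using comb_perm[OF _ _ cond] by auto
    have "has_transfer_exponent H (P (\<sigma> (i (\<pi> t)))) D (\<rho> (\<sigma> t)) C" if t: "t \<in> {1..N+1}" for t
    proof -
      have pt: "\<pi> t \<in> {1..N+1}" using pi(1) t by (auto simp: bij_betw_def)
      have k2: "i (\<pi> t) \<le> t" using pi(2) t by blast
      have k: "i (\<pi> t) \<in> {1..N+1}" "i (\<pi> t) \<le> t" using irange[OF pt] k2 t by auto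
      have sk: "\<sigma> (i (\<pi> t)) \<in> {1..N+1}" using assms(7) k(1) by (auto simp: bij_betw_def)
      show ?thesis
        by (rule mono_transfer[OF _ _ _ ])
           (use assms(5,6,8,3) sk k t in auto)
    qed
    thus "i \<in> G" using pi unfolding G_def by blast
  qed
  have "measure_pmf.prob M Bad \<le> (\<Sum>t\<in>{1..m}. measure_pmf.prob M {i::nat\<Rightarrow>nat. card {s\<in>{1..N+1}. i s \<le> t} < t})"
    unfolding Bad_def by (rule measure_pmf.finite_measure_subadditive_finite) auto
  also have "\<dots> \<le> (\<Sum>t\<in>{1..m}. 0.03 * (1/2)^t)"
    unfolding M_def by (intro sum_mono bad_bound[OF nm m1]) auto
  also have "\<dots> = 0.03 * (1 - (1/2)^m)" by (subst sum_distrib_left[symmetric]) (simp only: geom_half)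
  also have "\<dots> \<le> 0.03" by simp
  finally have PB: "measure_pmf.prob M Bad \<le> 0.03" .
  have c: "measure_pmf.prob M (UNIV - Bad) = 1 - measure_pmf.prob M Bad"
    using measure_pmf.prob_compl[of Bad M] by simp
  have "1 - measure_pmf.prob M Bad = measure_pmf.prob M ((UNIV - Bad) \<inter> set_pmf M)"
    using c by (simp add: measure_Int_set_pmf)
  also have "\<dots> \<le> measure_pmf.prob M G" using sub by (rule measure_pmf.finite_measure_mono) simp
  finally show ?thesis using PB unfolding M_def G_def by simp
qed

end
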